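(* Let $n \geq 0$ and $k \geq 1$ be integers and let $p=(p_1,p_2)$ be a probability distribution on two bins. Let $M_n$ be the maximum load of the two bins when $n$ balls are thrown independently, each landing in bin $i$ with probability $p_i$. Let $p' = (1-\|p\|_k,\ \|p\|_k)$, where $\|p\|_k = (p_1^k+p_2^k)^{1/k}$, and let $M'_n$ be the load of bin $2$ when $n$ balls are thrown independently according to $p'$. Then $\Pr[M_n \geq k] \geq \Pr[M'_n \geq k]$.
   Context: The load of a bin is the number of balls that landed in it. *)

theory Defs
  imports "HOL-Probability.Probability"
begin

definition bin_pmf :: "real \<Rightarrow> nat pmf" where
  "bin_pmf q = map_pmf (\<lambda>b. if b then 2 else 1) (bernoulli_pmf q)"

definition throw_pmf :: "nat \<Rightarrow> real \<Rightarrow> (nat \<Rightarrow> nat) pmf" where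
  "throw_pmf n q = Pi_pmf {..<n} 0 (\<lambda>_. bin_pmf q)"

definition load :: "nat \<Rightarrow> (nat \<Rightarrow> nat) \<Rightarrow> nat \<Rightarrow> nat" where
  "load n \<omega> i = card {j \<in> {..<n}. \<omega> j = i}"

definition knorm :: "nat \<Rightarrow> real \<Rightarrow> real \<Rightarrow> real" where
  "knorm k p1 p2 = (p1 ^ k + p2 ^ k) powr (1 / real k)"

end

theory Submission
  imports Defs
begin


definition aa :: "nat \<Rightarrow> real \<Rightarrow> nat \<Rightarrow> real" where
  "aa n x i = real ((n-1) choose i) * x^i * (1-x)^(n-1-i)"

lemma t1: "((\<lambda>x. real (n choose j) * x^j * (1-x)^(n-j)) has_real_derivative
     real (n choose j) * (real j * x^(j-1) * (1-x)^(n-j) - x^j * (real (n-j) * (1-x)^(n-j-1)))) (at x)"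
  apply (rule derivative_eq_intros refl)+
  apply (simp add: algebra_simps)
  done

lemma t2:
  assumes "1 \<le> j" "j \<le> n"
  shows "real (n choose j) * (real j * x^(j-1) * (1-x)^(n-j) - x^j * (real (n-j) * (1-x)^(n-j-1)))
      = real n * (aa n x (j-1) - aa n x j)"
proof -
  have "j * (n choose j) = n * ((n-1) choose (j-1))"
    using assms by (intro times_binomial_minus1_eq) simp
  then have e1: "real j * real (n choose j) = real n * real ((n-1) choose (j-1))"
    by (metis of_nat_mult)
  have e2: "real (n-j) * real (n choose j) = real n * real ((n-1) choose j)"
    using binomial_absorb_comp[of n j] by (metis of_nat_mult)
  have e3: "n - 1 - (j - 1) = n - j" using assms by simp
  have e4: "n - 1 - j = n - j - 1" by simp
  have "real (n choose j) * (real j * x^(j-1) * (1-x)^(n-j) - x^j * (real (n-j) * (1-x)^(n-j-1)))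
     = (real j * real (n choose j)) * x^(j-1) * (1-x)^(n-j) - (real (n-j) * real (n choose j)) * x^j * (1-x)^(n-j-1)"
    by (simp add: algebra_simps)
  also have "\<dots> = real n * (aa n x (j-1) - aa n x j)"
    unfolding e1 e2 aa_def e3 e4 by (simp add: algebra_simps)
  finally show ?thesis .
qed

lemma FF_deriv:
  assumes "1 \<le> k" "k \<le> n"
  shows "((\<lambda>x. \<Sum>j=k..n. real (n choose j) * x^j * (1-x)^(n-j)) has_real_derivative
          real k * real (n choose k) * x^(k-1) * (1-x)^(n-k)) (at x)"
proof -
  have "((\<lambda>x. \<Sum>j=k..n. real (n choose j) * x^j * (1-x)^(n-j)) has_real_derivative
          (\<Sum>j=k..n. real n * (aa n x (j-1) - aa n x j))) (at x)"
  proof (rule DERIV_sum)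
    fix j assume "j \<in> {k..n}"
    then have j: "1 \<le> j" "j \<le> n" using assms by auto
    show "((\<lambda>x. real (n choose j) * x^j * (1-x)^(n-j)) has_real_derivative
          real n * (aa n x (j-1) - aa n x j)) (at x)"
      using t1[of n j x] unfolding t2[OF j] .
  qed
  moreover have "(\<Sum>j=k..n. real n * (aa n x (j-1) - aa n x j)) = real n * aa n x (k-1)"
  proof -
    have "(\<Sum>j=k..n. real n * (aa n x (j-1) - aa n x j))
        = (\<Sum>i=k-1..n-1. (\<lambda>i. - real n * aa n x i) (Suc i) - (\<lambda>i. - real n * aa n x i) i)"
      using assms
      by (intro sum.reindex_bij_witness[where i="\<lambda>i. Suc i" and j="\<lambda>j. j - 1"]) (auto simp: algebra_simps)
    also have "\<dots> = - real n * aa n x n + real n * aa n x (k-1)"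
      using assms by (subst sum_Suc_diff) auto
    also have "aa n x n = 0" using assms by (simp add: aa_def)
    finally show ?thesis by simp
  qed
  moreover have "real n * aa n x (k-1) = real k * real (n choose k) * x^(k-1) * (1-x)^(n-k)"
  proof -
    have "k * (n choose k) = n * ((n-1) choose (k-1))"
      using assms by (intro times_binomial_minus1_eq) simp
    then have "real k * real (n choose k) = real n * real ((n-1) choose (k-1))"
      by (metis of_nat_mult)
    moreover have "n - 1 - (k-1) = n - k" using assms by simp
    ultimately show ?thesis unfolding aa_def by simp
  qed
  ultimately show ?thesis by simp
qed


definition FF :: "nat \<Rightarrow> nat \<Rightarrow> real \<Rightarrow> real" where
  "FF n k x = (\<Sum>j=k..n. real (n choose j) * x^j * (1-x)^(n-j))"

lemma FF_ineq:
  assumes k: "1 \<le> k" and p: "0 \<le> p1" "0 \<le> p2" "p1 \<le> q" "p2 \<le> q" "q \<le> 1"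
    and qk: "q^k = p1^k + p2^k"
  shows "FF n k q \<le> FF n k p1 + FF n k p2"
proof (cases "k \<le> n")
  case False
  then show ?thesis by (simp add: FF_def)
next
  case True
  obtain k' where k': "k = Suc k'" using k by (cases k) auto
  define K where "K = real k * real (n choose k)"
  define G where "G = (\<lambda>y::real. K * y^(k-1) * (1-y)^(n-k))"
  define psi where "psi = (\<lambda>t. FF n k (t*p1) + FF n k (t*p2) - FF n k (t*q))"
  have dF: "((\<lambda>t. FF n k (t*c)) has_real_derivative G (t*c) * c) (at t)" for c t
  proof -
    have "((\<lambda>y. FF n k y) has_real_derivative G (t*c)) (at (t*c))"
      unfolding FF_def G_def K_def using FF_deriv[OF k True] .
    moreover have "((\<lambda>t. t*c) has_real_derivative c) (at t)"
      by (rule derivative_eq_intros refl)+ simp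
    ultimately show ?thesis by (rule DERIV_chain2)
  qed
  have Gc: "G (t*c) * c = K * t^k' * (c^k * (1-t*c)^(n-k))" for t c
    unfolding G_def k' by (simp add: power_mult_distrib algebra_simps)
  have K0: "K \<ge> 0" unfolding K_def by simp
  have "psi 0 \<le> psi 1"
  proof (rule DERIV_nonneg_imp_nondecreasing[of 0 1])
    fix t :: real assume t: "0 \<le> t" "t \<le> 1"
    have D: "(psi has_real_derivative G (t*p1) * p1 + G (t*p2) * p2 - G (t*q) * q) (at t)"
      unfolding psi_def by (intro DERIV_diff DERIV_add dF)
    have m1: "(1 - t*q)^(n-k) \<le> (1 - t*p1)^(n-k)"
      using t p by (intro power_mono) (auto intro: mult_left_mono mult_le_one)
    have m2: "(1 - t*q)^(n-k) \<le> (1 - t*p2)^(n-k)"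
      using t p by (intro power_mono) (auto intro: mult_left_mono mult_le_one)
    have "q^k * (1-t*q)^(n-k) = p1^k * (1-t*q)^(n-k) + p2^k * (1-t*q)^(n-k)"
      unfolding qk by (simp add: algebra_simps)
    also have "\<dots> \<le> p1^k * (1-t*p1)^(n-k) + p2^k * (1-t*p2)^(n-k)"
      using m1 m2 p by (intro add_mono mult_left_mono) auto
    finally have br: "0 \<le> p1^k * (1-t*p1)^(n-k) + p2^k * (1-t*p2)^(n-k) - q^k * (1-t*q)^(n-k)"
      by simp
    have "G (t*p1) * p1 + G (t*p2) * p2 - G (t*q) * q
        = K * t^k' * (p1^k * (1-t*p1)^(n-k) + p2^k * (1-t*p2)^(n-k) - q^k * (1-t*q)^(n-k))"
      unfolding Gc by (simp add: algebra_simps)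
    also have "\<dots> \<ge> 0"
      using K0 t br by (intro mult_nonneg_nonneg) auto
    finally show "\<exists>y. (psi has_real_derivative y) (at t) \<and> 0 \<le> y"
      using D by blast
  qed simp
  moreover have "FF n k 0 = 0"
    unfolding FF_def using k by (intro sum.neutral) auto
  ultimately show ?thesis unfolding psi_def by simp
qed


lemma throw_alt:
  "throw_pmf n q = map_pmf (\<lambda>h x. if x \<in> {..<n} then (if h x then 2 else 1) else 0)
      (Pi_pmf {..<n} False (\<lambda>_. bernoulli_pmf q))"
proof -
  let ?g = "\<lambda>b::bool. if b then 2 else (1::nat)"
  have "throw_pmf n q = Pi_pmf {..<n} 0 (\<lambda>_. map_pmf ?g (bernoulli_pmf q))"
    unfolding throw_pmf_def bin_pmf_def ..
  also have "\<dots> = map_pmf (\<lambda>f x. if x \<in> {..<n} then f x else 0)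
                     (Pi_pmf {..<n} 1 (\<lambda>_. map_pmf ?g (bernoulli_pmf q)))"
    by (rule Pi_pmf_default_swap[symmetric]) simp
  also have "Pi_pmf {..<n} 1 (\<lambda>_. map_pmf ?g (bernoulli_pmf q))
      = map_pmf (\<lambda>h. ?g \<circ> h) (Pi_pmf {..<n} False (\<lambda>_. bernoulli_pmf q))"
    by (rule Pi_pmf_map) auto
  finally show ?thesis by (simp add: pmf.map_comp o_def)
qed

lemma prob_throw:
  assumes q: "0 \<le> q" "q \<le> 1"
  shows "measure_pmf.prob (throw_pmf n q) {\<omega>. P (load n \<omega> 1) (load n \<omega> 2)}
       = measure_pmf.prob (binomial_pmf n q) {c. P (n - c) c}"
proof -
  let ?c = "\<lambda>h::nat\<Rightarrow>bool. card {j\<in>{..<n}. h j}"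
  let ?f = "\<lambda>(h::nat\<Rightarrow>bool) x. if x \<in> {..<n} then (if h x then 2 else 1) else (0::nat)"
  have l2: "load n (?f h) 2 = ?c h" for h
    unfolding load_def by (intro arg_cong[where f=card]) auto
  have l1: "load n (?f h) 1 = n - ?c h" for h
  proof -
    have "load n (?f h) 1 = card ({..<n} - {j\<in>{..<n}. h j})"
      unfolding load_def by (intro arg_cong[where f=card]) auto
    also have "\<dots> = n - ?c h" by (subst card_Diff_subset) auto
    finally show ?thesis .
  qed
  have bin: "binomial_pmf n q = map_pmf ?c (Pi_pmf {..<n} False (\<lambda>_. bernoulli_pmf q))"
    using q by (intro binomial_pmf_altdef') auto
  show ?thesis
    unfolding throw_alt bin measure_map_pmf vimage_def
    by (simp only: l1 l2 mem_Collect_eq)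
qed

lemma prob_bin_ge:
  assumes q: "0 \<le> q" "q \<le> 1"
  shows "measure_pmf.prob (binomial_pmf n q) {c. k \<le> c} = FF n k q"
proof -
  have "measure_pmf.prob (binomial_pmf n q) {c. k \<le> c} = measure_pmf.prob (binomial_pmf n q) {k..n}"
    using q by (intro measure_prob_cong_0) auto
  also have "\<dots> = FF n k q"
    using q by (subst measure_measure_pmf_finite) (auto simp: FF_def)
  finally show ?thesis .
qed


theorem lemma10:
  fixes n k :: nat and p1 p2 :: real
  assumes "k \<ge> 1" and "p1 \<ge> 0" and "p2 \<ge> 0" and "p1 + p2 = 1"
  shows "measure_pmf.prob (throw_pmf n p2)
            {\<omega>. max (load n \<omega> 1) (load n \<omega> 2) \<ge> k}
       \<ge> measure_pmf.prob (throw_pmf n (knorm k p1 p2))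
            {\<omega>. load n \<omega> 2 \<ge> k}"
proof -
  obtain k' where k': "k = Suc k'" using assms(1) by (cases k) auto
  define s where "s = p1^k + p2^k"
  define q where "q = knorm k p1 p2"
  have p1le: "p1 \<le> 1" "p2 \<le> 1" using assms by auto
  have e12: "1 - p2 = p1" "1 - p1 = p2" using assms by auto
  have s_pos: "s > 0"
  proof (cases "p1 > 0")
    case True then show ?thesis unfolding s_def using assms by (simp add: add_pos_nonneg)
  next
    case False then have "p2 = 1" using assms by auto
    then show ?thesis unfolding s_def using assms by (simp add: add_nonneg_pos)
  qed
  have q_def': "q = s powr (1 / real k)" unfolding q_def knorm_def s_def ..
  have q_pos: "q > 0" unfolding q_def' using s_pos by simp
  have qk: "q^k = s"
  proof -
    have "q^k = q powr real k" using q_pos by (simp add: powr_realpow)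
    also have "\<dots> = s powr (1 / real k * real k)" unfolding q_def' by (simp add: powr_powr)
    also have "\<dots> = s" using assms(1) s_pos by simp
    finally show ?thesis .
  qed
  have "p1^k \<le> p1^1" "p2^k \<le> p2^1"
    using assms p1le by (intro power_decreasing; simp)+
  then have s_le: "s \<le> 1" unfolding s_def using assms by simp
  have q_le: "q \<le> 1"
    using power_le_imp_le_base[of q k' 1] qk s_le k' by simp
  have p1q: "p1 \<le> q"
    using power_le_imp_le_base[of p1 k' q] qk q_pos assms k' unfolding s_def by simp
  have p2q: "p2 \<le> q"
    using power_le_imp_le_base[of p2 k' q] qk q_pos assms k' unfolding s_def by simp
  have RHS: "measure_pmf.prob (throw_pmf n q) {\<omega>. load n \<omega> 2 \<ge> k} = FF n k q"
    using prob_throw[of q n "\<lambda>a b. k \<le> b"] prob_bin_ge[of q n k] q_pos q_le by simp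
  have LHS: "measure_pmf.prob (throw_pmf n p2) {\<omega>. max (load n \<omega> 1) (load n \<omega> 2) \<ge> k}
      = measure_pmf.prob (binomial_pmf n p2) {c. k \<le> max (n - c) c}"
    using prob_throw[of p2 n "\<lambda>a b. k \<le> max a b"] assms p1le by simp
  show ?thesis
  proof (cases "2 * k \<le> n")
    case True
    have "measure_pmf.prob (binomial_pmf n p2) {c. k \<le> max (n - c) c}
        = measure_pmf.prob (binomial_pmf n p2) UNIV"
      using True assms p1le by (intro measure_prob_cong_0) auto
    then have "measure_pmf.prob (binomial_pmf n p2) {c. k \<le> max (n - c) c} = 1" by simp
    moreover have "measure_pmf.prob (throw_pmf n q) {\<omega>. load n \<omega> 2 \<ge> k} \<le> 1"
      by (rule measure_pmf.prob_le_1)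
    ultimately show ?thesis unfolding LHS q_def by simp
  next
    case False
    have "measure_pmf.prob (binomial_pmf n p2) {c. k \<le> max (n - c) c}
        = measure_pmf.prob (binomial_pmf n p2) ({k..n} \<union> {c. c + k \<le> n})"
      using False assms p1le by (intro measure_prob_cong_0) auto
    also have "\<dots> = (\<Sum>c\<in>{k..n}. pmf (binomial_pmf n p2) c) + (\<Sum>c\<in>{c. c + k \<le> n}. pmf (binomial_pmf n p2) c)"
    proof -
      have fin: "finite {c. c + k \<le> n}" by (rule finite_subset[of _ "{..n}"]) auto
      show ?thesis
        using False fin by (subst measure_measure_pmf_finite) (auto intro!: sum.union_disjoint)
    qed
    also have "(\<Sum>c\<in>{k..n}. pmf (binomial_pmf n p2) c) = FF n k p2"
      using assms p1le by (simp add: FF_def)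
    also have "(\<Sum>c\<in>{c. c + k \<le> n}. pmf (binomial_pmf n p2) c) = FF n k p1"
    proof -
      have "(\<Sum>c\<in>{c. c + k \<le> n}. pmf (binomial_pmf n p2) c)
           = (\<Sum>c\<in>{c. c + k \<le> n}. real (n choose c) * p2^c * p1^(n-c))"
        using assms p1le by (intro sum.cong) (simp_all add: e12)
      also have "\<dots> = (\<Sum>j\<in>{k..n}. real (n choose j) * p1^j * p2^(n-j))"
        by (intro sum.reindex_bij_witness[where i="\<lambda>j. n - j" and j="\<lambda>c. n - c"])
           (auto simp: binomial_symmetric[symmetric])
      also have "\<dots> = FF n k p1"
        unfolding FF_def using assms by (intro sum.cong) (simp_all add: e12)
      finally show ?thesis .
    qed
    finally have "measure_pmf.prob (binomial_pmf n p2) {c. k \<le> max (n - c) c} = FF n k p2 + FF n k p1" .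
    moreover have "FF n k q \<le> FF n k p1 + FF n k p2"
      using FF_ineq[OF assms(1) assms(2) assms(3) p1q p2q q_le] qk unfolding s_def by simp
    ultimately show ?thesis unfolding LHS RHS[unfolded q_def] q_def by simp
  qed
qed

end
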